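(* Let $\epsilon > 0$ and $\delta \in (0,1)$, and set $d = \lceil \ln(1/\delta) \rceil$ and $w = 1 + \lceil e/\epsilon \rceil$. Consider a stream of $N$ records. Each record $r$ has a primary key (record id) $r_0$ and values $r_1,\dots,r_p$ on $p$ searchable attributes $a_1,\dots,a_p$; $\mathcal{D}(a_i)$ denotes the domain of $a_i$. Choose $d \cdot p$ hash functions $h_i^j : \mathcal{D}(a_i) \to \{1,\dots,w\}$, for $i \in \{1,\dots,p\}$ and $j \in \{1,\dots,d\}$, uniformly at random from a pairwise-independent family. Build $p$ arrays $CM_1,\dots,CM_p$, each of size $w \times d$, every cell of which initially holds an empty set of record ids. Each record $r$ is inserted by adding $r_0$ to the cell $CM_i[j, h_i^j(r_i)]$ for every $i \in \{1,\dots,p\}$ and every $j \in \{1,\dots,d\}$. A query $q = (q_1,\dots,q_p)$ consists of one equality predicate $a_i = q_i$ on each of the $p$ attributes. Let $f(q)$ be the number of records $r$ in the stream with $r_i = q_i$ for all $i$. Define the estimate $$\hat f(q) = \left| \bigcap_{i \in \{1,\dots,p\},\, j \in \{1,\dots,d\}} CM_i[j, h_i^j(q_i)] \right|.$$ Then $$\Pr\big(|\hat f(q) - f(q)| \le \epsilon^d (N - f(q)) \le \epsilon^d N\big) \ge 1 - \delta.$$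
   Context: This describes a sketch that extends the Count-min sketch by storing record ids in each cell. The probability is taken over the random choice of the hash functions. Record ids are distinct across records. *)

theory Defs
  imports "HOL-Probability.Probability"
begin

text \<open>A record is a pair (record id, attribute values); attribute i (1 \<le> i \<le> p) of
  record r is snd r i.  A hash function for attribute i maps values to {1..w}.\<close>

definition pairwise_indep_family :: "('v \<Rightarrow> nat) set \<Rightarrow> 'v set \<Rightarrow> nat \<Rightarrow> bool" where
  "pairwise_indep_family H D w \<longleftrightarrow>
     finite H \<and> H \<noteq> {} \<and> (\<forall>h\<in>H. h ` D \<subseteq> {1..w}) \<and>
     (\<forall>x\<in>D. \<forall>a\<in>{1..w}.
        real (card {h\<in>H. h x = a}) / real (card H) = 1 / real w) \<and>
     (\<forall>x\<in>D. \<forall>y\<in>D. x \<noteq> y \<longrightarrow> (\<forall>a\<in>{1..w}. \<forall>b\<in>{1..w}.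
        real (card {h\<in>H. h x = a \<and> h y = b}) / real (card H) = 1 / (real w)^2))"

text \<open>A sketch: CM i j c is the cell in row j, column c of array CM_i (a set of record ids).\<close>
type_synonym 'id sketch = "nat \<Rightarrow> nat \<Rightarrow> nat \<Rightarrow> 'id set"

definition cm_empty :: "'id sketch" where
  "cm_empty = (\<lambda>i j c. {})"

definition cm_insert :: "nat \<Rightarrow> nat \<Rightarrow> (nat \<times> nat \<Rightarrow> 'v \<Rightarrow> nat) \<Rightarrow>
    'id \<times> (nat \<Rightarrow> 'v) \<Rightarrow> 'id sketch \<Rightarrow> 'id sketch" where
  "cm_insert p d h r CM = (\<lambda>i j c.
     if i \<in> {1..p} \<and> j \<in> {1..d} \<and> c = h (i, j) (snd r i)
     then insert (fst r) (CM i j c) else CM i j c)"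

definition cm_build :: "nat \<Rightarrow> nat \<Rightarrow> (nat \<times> nat \<Rightarrow> 'v \<Rightarrow> nat) \<Rightarrow>
    ('id \<times> (nat \<Rightarrow> 'v)) list \<Rightarrow> 'id sketch" where
  "cm_build p d h rs = fold (cm_insert p d h) rs cm_empty"

definition cm_estimate :: "nat \<Rightarrow> nat \<Rightarrow> (nat \<times> nat \<Rightarrow> 'v \<Rightarrow> nat) \<Rightarrow>
    ('id \<times> (nat \<Rightarrow> 'v)) list \<Rightarrow> (nat \<Rightarrow> 'v) \<Rightarrow> nat" where
  "cm_estimate p d h rs q =
     card (\<Inter>(i, j)\<in>{1..p} \<times> {1..d}. cm_build p d h rs i j (h (i, j) (q i)))"

definition freq :: "nat \<Rightarrow> ('id \<times> (nat \<Rightarrow> 'v)) list \<Rightarrow> (nat \<Rightarrow> 'v) \<Rightarrow> nat" where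
  "freq p rs q = length (filter (\<lambda>r. \<forall>i\<in>{1..p}. snd r i = q i) rs)"

end

theory Submission
  imports Defs
begin

lemma fold_cm:
  "fold (cm_insert p d h) rs CM i j c = CM i j c \<union>
     {fst r | r. r \<in> set rs \<and> i \<in> {1..p} \<and> j \<in> {1..d} \<and> c = h (i, j) (snd r i)}"
  by (induction rs arbitrary: CM) (auto simp: cm_insert_def)

lemma est_eq:
  assumes "p \<ge> 1" "d \<ge> 1" "distinct (map fst rs)"
  shows "cm_estimate p d h rs q =
    card {r\<in>set rs. \<forall>i\<in>{1..p}. \<forall>j\<in>{1..d}. h (i,j) (snd r i) = h (i,j) (q i)}"
proof -
  let ?C = "{r\<in>set rs. \<forall>i\<in>{1..p}. \<forall>j\<in>{1..d}. h (i,j) (snd r i) = h (i,j) (q i)}"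
  have inj: "inj_on fst (set rs)" using assms(3) by (simp add: distinct_map)
  have "(\<Inter>(i, j)\<in>{1..p} \<times> {1..d}. cm_build p d h rs i j (h (i, j) (q i))) = fst ` ?C"
  proof (intro equalityI subsetI)
    fix x assume x: "x \<in> (\<Inter>(i, j)\<in>{1..p} \<times> {1..d}. cm_build p d h rs i j (h (i, j) (q i)))"
    have "(1::nat,1::nat) \<in> {1..p} \<times> {1..d}" using assms by auto
    with x have "x \<in> cm_build p d h rs 1 1 (h (1, 1) (q 1))" by blast
    then obtain r where r: "r \<in> set rs" "fst r = x"
      by (auto simp: cm_build_def fold_cm cm_empty_def)
    have "\<forall>i\<in>{1..p}. \<forall>j\<in>{1..d}. h (i,j) (snd r i) = h (i,j) (q i)"
    proof (intro ballI)
      fix i j assume ij: "i \<in> {1..p}" "j \<in> {1..d}"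
      with x have "x \<in> cm_build p d h rs i j (h (i, j) (q i))" by blast
      then obtain r' where r': "r' \<in> set rs" "fst r' = x" "h (i,j) (q i) = h (i,j) (snd r' i)"
        by (auto simp: cm_build_def fold_cm cm_empty_def)
      have "r' = r" using inj r r' by (auto simp: inj_on_def)
      then show "h (i,j) (snd r i) = h (i,j) (q i)" using r' by simp
    qed
    then show "x \<in> fst ` ?C" using r by auto
  next
    fix x assume "x \<in> fst ` ?C"
    then show "x \<in> (\<Inter>(i, j)\<in>{1..p} \<times> {1..d}. cm_build p d h rs i j (h (i, j) (q i)))"
      by (force simp: cm_build_def fold_cm cm_empty_def)
  qed
  moreover have "card (fst ` ?C) = card ?C"
    by (rule card_image) (rule inj_on_subset[OF inj], auto)
  ultimately show ?thesis by (simp add: cm_estimate_def)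
qed

lemma freq_eq:
  assumes "distinct (map fst rs)"
  shows "freq p rs q = card {r\<in>set rs. \<forall>i\<in>{1..p}. snd r i = q i}"
proof -
  have "distinct rs" using assms by (simp add: distinct_map)
  then have "length (filter (\<lambda>r. \<forall>i\<in>{1..p}. snd r i = q i) rs)
      = card (set (filter (\<lambda>r. \<forall>i\<in>{1..p}. snd r i = q i) rs))"
    by (intro distinct_card[symmetric] distinct_filter)
  then show ?thesis unfolding freq_def by simp
qed

lemma coll_prob:
  assumes fam: "pairwise_indep_family Hs Ds w" and x: "x \<in> Ds" and y: "y \<in> Ds" and xy: "x \<noteq> y"
  shows "measure_pmf.prob (pmf_of_set Hs) {g. g x = g y} = 1 / real w"
proof -
  have fin: "finite Hs" and ne: "Hs \<noteq> {}" and rng: "\<forall>g\<in>Hs. g ` Ds \<subseteq> {1..w}"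
    and pw: "\<And>a b. a \<in> {1..w} \<Longrightarrow> b \<in> {1..w} \<Longrightarrow>
        real (card {g\<in>Hs. g x = a \<and> g y = b}) / real (card Hs) = 1 / (real w)^2"
  proof -
    have F: "finite Hs \<and> Hs \<noteq> {} \<and> (\<forall>h\<in>Hs. h ` Ds \<subseteq> {1..w}) \<and>
     (\<forall>x\<in>Ds. \<forall>a\<in>{1..w}.
        real (card {h\<in>Hs. h x = a}) / real (card Hs) = 1 / real w) \<and>
     (\<forall>x\<in>Ds. \<forall>y\<in>Ds. x \<noteq> y \<longrightarrow> (\<forall>a\<in>{1..w}. \<forall>b\<in>{1..w}.
        real (card {h\<in>Hs. h x = a \<and> h y = b}) / real (card Hs) = 1 / (real w)^2))"
      using fam unfolding pairwise_indep_family_def .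
    show "finite Hs" "Hs \<noteq> {}" "\<forall>g\<in>Hs. g ` Ds \<subseteq> {1..w}" using F by simp_all
    fix a b assume "a \<in> {1..w}" "b \<in> {1..w}"
    then show "real (card {g\<in>Hs. g x = a \<and> g y = b}) / real (card Hs) = 1 / (real w)^2"
      using F x y xy by blast
  qed
  have w: "w \<ge> 1"
  proof -
    obtain g where g: "g \<in> Hs" using ne by auto
    have "g x \<in> {1..w}" using rng x g by (meson image_subset_iff)
    then show ?thesis by auto
  qed
  have eq: "Hs \<inter> {g. g x = g y} = (\<Union>a\<in>{1..w}. {g\<in>Hs. g x = a \<and> g y = a})"
  proof -
    have gx: "\<forall>g\<in>Hs. g x \<in> {1..w}" using rng x by blast
    show ?thesis
    proof (intro equalityI subsetI)
      fix g assume "g \<in> Hs \<inter> {g. g x = g y}"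
      then show "g \<in> (\<Union>a\<in>{1..w}. {g\<in>Hs. g x = a \<and> g y = a})" using gx by force
    qed auto
  qed
  have "card (Hs \<inter> {g. g x = g y}) = (\<Sum>a\<in>{1..w}. card {g\<in>Hs. g x = a \<and> g y = a})"
    unfolding eq by (rule card_UN_disjoint) (use fin in auto)
  then have "real (card (Hs \<inter> {g. g x = g y})) / real (card Hs)
      = (\<Sum>a\<in>{1..w}. real (card {g\<in>Hs. g x = a \<and> g y = a}) / real (card Hs))"
    by (simp add: sum_divide_distrib)
  also have "\<dots> = (\<Sum>a\<in>{1..w}. 1 / (real w)^2)" using pw by simp
  also have "\<dots> = 1 / real w" using w by (simp add: power2_eq_square)
  finally show ?thesis using fin ne by (simp add: measure_pmf_of_set)
qed

lemma prob_coll_le: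
  fixes H :: "nat \<Rightarrow> ('v \<Rightarrow> nat) set" and D :: "nat \<Rightarrow> 'v set"
  assumes fam: "pairwise_indep_family (H i0) (D i0) w"
    and i0: "i0 \<in> {1..p}" and x: "x \<in> D i0" and y: "y \<in> D i0" and xy: "x \<noteq> y"
  shows "measure_pmf.prob (Pi_pmf ({1..p} \<times> {1..d}) (\<lambda>_. 0) (\<lambda>(i, j). pmf_of_set (H i)))
           {h. \<forall>j\<in>{1..d}. h (i0, j) x = h (i0, j) y} = (1 / real w) ^ d"
proof -
  let ?S = "{1..p} \<times> {1..d}"
  define B where "B = (\<lambda>(i::nat, j::nat). if i = i0 then {g::'v\<Rightarrow>nat. g x = g y} else UNIV)"
  have ev: "{h. \<forall>j\<in>{1..d}. h (i0, j) x = h (i0, j) y} = Pi ?S B"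
    using i0 by (auto simp: B_def Pi_def)
  have "measure_pmf.prob (Pi_pmf ?S (\<lambda>_. 0) (\<lambda>(i, j). pmf_of_set (H i))) (Pi ?S B)
     = (\<Prod>z\<in>?S. measure_pmf.prob ((\<lambda>(i, j). pmf_of_set (H i)) z) (B z))"
    by (rule measure_Pi_pmf_Pi) simp
  also have "\<dots> = (\<Prod>z\<in>?S. if fst z = i0 then 1 / real w else 1)"
  proof (rule prod.cong)
    fix z assume "z \<in> ?S"
    obtain i j where z: "z = (i, j)" by force
    show "measure_pmf.prob ((\<lambda>(i, j). pmf_of_set (H i)) z) (B z) = (if fst z = i0 then 1 / real w else 1)"
      using coll_prob[OF fam x y xy] by (simp add: z B_def)
  qed simp
  also have "\<dots> = (\<Prod>z\<in>?S \<inter> {z. fst z = i0}. 1 / real w)"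
    by (simp add: prod.If_cases)
  also have "?S \<inter> {z. fst z = i0} = {i0} \<times> {1..d}" using i0 by auto
  also have "(\<Prod>z\<in>{i0} \<times> {1..d}. 1 / real w) = (1 / real w) ^ d" by simp
  finally show ?thesis using ev by simp
qed

theorem lemma3p2:
  fixes \<epsilon> \<delta> :: real and p N :: nat
    and D :: "nat \<Rightarrow> 'v set" and H :: "nat \<Rightarrow> ('v \<Rightarrow> nat) set"
    and rs :: "('id \<times> (nat \<Rightarrow> 'v)) list" and q :: "nat \<Rightarrow> 'v"
  defines "d \<equiv> nat \<lceil>ln (1 / \<delta>)\<rceil>"
    and "w \<equiv> 1 + nat \<lceil>exp 1 / \<epsilon>\<rceil>"
  assumes "\<epsilon> > 0" and "0 < \<delta>" and "\<delta> < 1"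
    and "p \<ge> 1"
    and "\<And>i. i \<in> {1..p} \<Longrightarrow> pairwise_indep_family (H i) (D i) w"
    and "length rs = N" and "distinct (map fst rs)"
    and "\<And>r i. r \<in> set rs \<Longrightarrow> i \<in> {1..p} \<Longrightarrow> snd r i \<in> D i"
    and "\<And>i. i \<in> {1..p} \<Longrightarrow> q i \<in> D i"
  shows "measure_pmf.prob
           (Pi_pmf ({1..p} \<times> {1..d}) (\<lambda>_. 0) (\<lambda>(i, j). pmf_of_set (H i)))
           {h. \<bar>real (cm_estimate p d h rs q) - real (freq p rs q)\<bar>
                  \<le> \<epsilon> ^ d * (real N - real (freq p rs q))
               \<and> \<epsilon> ^ d * (real N - real (freq p rs q)) \<le> \<epsilon> ^ d * real N}
         \<ge> 1 - \<delta>"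
proof -
  note eps = assms(3) and del = assms(4,5) and p1 = assms(6) and fam = assms(7)
    and len = assms(8) and dist = assms(9) and dom = assms(10,11)
  define M where "M = Pi_pmf ({1..p} \<times> {1..d}) (\<lambda>_. 0) (\<lambda>(i, j). pmf_of_set (H i))"
  have "ln (1 / \<delta>) > 0" using del by simp
  then have d1: "d \<ge> 1" unfolding d_def by linarith
  have dge: "real d \<ge> ln (1 / \<delta>)" unfolding d_def by linarith
  have "real w \<ge> 1 + exp 1 / \<epsilon>" unfolding w_def by linarith
  then have "real w * \<epsilon> \<ge> \<epsilon> + exp 1" using eps by (simp add: field_simps)
  then have we: "real w * \<epsilon> > exp 1" using eps by linarith
  have wpos: "real w > 0" unfolding w_def by simp
  define coll where "coll = (\<lambda>(h::nat \<times> nat \<Rightarrow> 'v \<Rightarrow> nat) (r::'id \<times> (nat \<Rightarrow> 'v)).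
     \<forall>i\<in>{1..p}. \<forall>j\<in>{1..d}. h (i,j) (snd r i) = h (i,j) (q i))"
  define match where "match = (\<lambda>r::'id \<times> (nat \<Rightarrow> 'v). \<forall>i\<in>{1..p}. snd r i = q i)"
  define B where "B = {r\<in>set rs. \<not> match r}"
  define X where "X = (\<lambda>h. real (card {r\<in>B. coll h r}))"
  have finrs: "finite (set rs)" by simp
  have finB: "finite B" unfolding B_def by simp
  have drs: "distinct rs" using dist by (simp add: distinct_map)
  have cardrs: "card (set rs) = N" using drs len by (simp add: distinct_card)
  have key: "real (cm_estimate p d h rs q) - real (freq p rs q) = X h" for h
  proof -
    have e: "cm_estimate p d h rs q = card {r\<in>set rs. coll h r}"
      using est_eq[OF p1 d1 dist] unfolding coll_def by simp
    have f: "freq p rs q = card {r\<in>set rs. match r}"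
      using freq_eq[OF dist] unfolding match_def by simp
    have un: "{r\<in>set rs. coll h r} = {r\<in>set rs. match r} \<union> {r\<in>B. coll h r}"
      unfolding B_def coll_def match_def by auto
    have "card {r\<in>set rs. coll h r} = card {r\<in>set rs. match r} + card {r\<in>B. coll h r}"
      unfolding un by (rule card_Un_disjoint) (auto simp: B_def)
    then show ?thesis using e f X_def by simp
  qed
  have NB: "real N - real (freq p rs q) = real (card B)"
  proof -
    have f: "freq p rs q = card {r\<in>set rs. match r}"
      using freq_eq[OF dist] unfolding match_def by simp
    have "B = set rs - {r\<in>set rs. match r}" unfolding B_def by auto
    then have "card B = card (set rs) - card {r\<in>set rs. match r}"
      by (simp add: card_Diff_subset)
    moreover have "card {r\<in>set rs. match r} \<le> card (set rs)" by (rule card_mono) auto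
    ultimately show ?thesis using f cardrs by simp
  qed
  define E where "E = {h. \<bar>real (cm_estimate p d h rs q) - real (freq p rs q)\<bar>
                  \<le> \<epsilon> ^ d * (real N - real (freq p rs q))
               \<and> \<epsilon> ^ d * (real N - real (freq p rs q)) \<le> \<epsilon> ^ d * real N}"
  have Xnn: "X h \<ge> 0" for h unfolding X_def by simp
  have second: "\<epsilon> ^ d * (real N - real (freq p rs q)) \<le> \<epsilon> ^ d * real N"
    using eps by (intro mult_left_mono) auto
  have Emem: "h \<in> E \<longleftrightarrow> X h \<le> \<epsilon> ^ d * real (card B)" for h
    unfolding E_def using key[of h] Xnn[of h] second NB by simp
  have Eeq: "E = {h. X h \<le> \<epsilon> ^ d * real (card B)}"
    using Emem by blast
  have goal: "?thesis \<longleftrightarrow> measure_pmf.prob M E \<ge> 1 - \<delta>"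
    unfolding E_def M_def by (rule refl)
  show ?thesis
  proof (cases "card B = 0")
    case True
    then have "B = {}" using finB by simp
    then have "E = UNIV" unfolding Eeq X_def by simp
    then have "measure_pmf.prob M E = 1" by simp
    then show ?thesis using del goal by simp
  next
    case False
    define t where "t = \<epsilon> ^ d * real (card B)"
    have tpos: "t > 0" unfolding t_def using False eps by simp
    have Xsum: "X h = (\<Sum>r\<in>B. indicator {h. coll h r} h)" for h
      unfolding X_def using finB by (simp add: indicator_def sum.If_cases Int_def)
    have int: "integrable M X"
      unfolding Xsum[abs_def] by (intro Bochner_Integration.integrable_sum integrable_real_indicator) (auto simp: measure_pmf.emeasure_eq_measure)
    have pr: "measure_pmf.prob M {h. coll h r} \<le> (1 / real w) ^ d" if r: "r \<in> B" for r
    proof -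
      from r obtain i0 where i0: "i0 \<in> {1..p}" "snd r i0 \<noteq> q i0"
        unfolding B_def match_def by auto
      have rin: "r \<in> set rs" using r unfolding B_def by simp
      have "measure_pmf.prob M {h. coll h r}
          \<le> measure_pmf.prob M {h. \<forall>j\<in>{1..d}. h (i0, j) (snd r i0) = h (i0, j) (q i0)}"
        by (rule measure_pmf.finite_measure_mono) (use i0 in \<open>auto simp: coll_def\<close>)
      also have "\<dots> = (1 / real w) ^ d"
        unfolding M_def
        by (rule prob_coll_le[where H=H and D=D, OF fam[OF i0(1)] i0(1) dom(1)[OF rin i0(1)] dom(2)[OF i0(1)] i0(2)])
      finally show ?thesis .
    qed
    have EX: "measure_pmf.expectation M X \<le> real (card B) * (1 / real w) ^ d"
    proof -
      have "measure_pmf.expectation M X = (\<Sum>r\<in>B. measure_pmf.prob M {h. coll h r})"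
        unfolding Xsum[abs_def]
        by (subst Bochner_Integration.integral_sum)
           (auto intro!: integrable_real_indicator simp: measure_pmf.emeasure_eq_measure)
      also have "\<dots> \<le> (\<Sum>r\<in>B. (1 / real w) ^ d)" by (rule sum_mono) (rule pr)
      finally show ?thesis by simp
    qed
    have mk: "measure_pmf.prob M {h\<in>space M. X h \<ge> t} \<le> measure_pmf.expectation M X / t"
      by (rule integral_Markov_inequality_measure[OF int, of UNIV]) (use tpos Xnn in auto)
    have "measure_pmf.expectation M X / t \<le> real (card B) * (1 / real w) ^ d / t"
      using EX tpos by (simp add: divide_right_mono)
    also have "\<dots> = (1 / (real w * \<epsilon>)) ^ d"
      unfolding t_def using False eps wpos by (simp add: field_simps power_mult_distrib)
    also have "\<dots> \<le> (1 / exp 1) ^ d"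
      using we eps wpos by (intro power_mono) (auto simp: field_simps)
    also have "\<dots> = exp (- real d)"
    proof -
      have "exp (real d) = exp 1 ^ d" using exp_of_nat_mult[of d 1] by simp
      then show ?thesis by (simp add: exp_minus power_one_over inverse_eq_divide)
    qed
    also have "\<dots> \<le> exp (ln \<delta>)"
    proof -
      have "- real d \<le> ln \<delta>" using dge del by (simp add: ln_div)
      then show ?thesis by (rule exp_mono)
    qed
    also have "\<dots> = \<delta>" using del by simp
    finally have bad: "measure_pmf.prob M {h. X h \<ge> t} \<le> \<delta>" using mk by simp
    have "measure_pmf.prob M {h. X h > t} \<le> measure_pmf.prob M {h. X h \<ge> t}"
      by (rule measure_pmf.finite_measure_mono) auto
    with bad have bad': "measure_pmf.prob M {h. X h > t} \<le> \<delta>" by simp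
    have "measure_pmf.prob M E = 1 - measure_pmf.prob M {h. X h > t}"
    proof -
      have "E = UNIV - {h. X h > t}" unfolding Eeq t_def by auto
      moreover have "measure_pmf.prob M (space M - {h. X h > t}) = 1 - measure_pmf.prob M {h. X h > t}"
        by (rule measure_pmf.prob_compl) simp
      ultimately show ?thesis by simp
    qed
    then have "measure_pmf.prob M E \<ge> 1 - \<delta>" using bad' by linarith
    then show ?thesis using goal by simp
  qed
qed

end
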